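(* Let $d'$ be a positive integer and $\varepsilon,\gamma\in(0,1)$ with $d'\ge\left(\frac12\left\lceil\frac{1}{2\varepsilon+\gamma}\right\rceil\right)^{1/\gamma}$, and let $p$ be the smallest prime larger than ${d'}^{2\varepsilon+\gamma}$. Then for every vector $\mathbf{x}'\in\mathbb{R}^{d'}$ with at most ${d'}^{\varepsilon}$ non-zero entries there exists $h_\star\in\mathcal H_{d',2\varepsilon+\gamma}$ such that $h_\star(i)\ne h_\star(j)$ for all $i\ne j$ with $x'_i\ne0\ne x'_j$.
   Context: For $d'$ and $\varepsilon'>0$: let $p$ be the smallest prime larger than ${d'}^{\varepsilon'}$ and $n=\lceil 1/\varepsilon'\rceil$; for $i\in[d']$ let $\mathrm{base}_p(i)\in\{0,\dots,p-1\}^n$ be the $n$-digit base-$p$ representation of $i$, with $j$-th digit $\mathrm{base}_p(i)_j$. For $a\in[p]$ define $h_a:[d']\to[p]$ by $h_a(i)=a+\sum_{j=1}^n a^j\,\mathrm{base}_p(i)_j \bmod p$, and $\mathcal H_{d',\varepsilon'}=\{h_a: a\in[p]\}$. Here $\varepsilon'=2\varepsilon+\gamma$. *)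

theory Defs
  imports "HOL-Computational_Algebra.Primes" Complex_Main
begin

definition smallest_prime_gt :: "real \<Rightarrow> nat" where
  "smallest_prime_gt t = (LEAST p. prime p \<and> real p > t)"

definition hash_len :: "real \<Rightarrow> nat" where
  "hash_len eps' = nat \<lceil>1 / eps'\<rceil>"

text \<open>j-th base-p digit of i (j = 1 is the least significant digit).\<close>
definition base_digit :: "nat \<Rightarrow> nat \<Rightarrow> nat \<Rightarrow> nat" where
  "base_digit p i j = (i div p ^ (j - 1)) mod p"

definition hash_fun :: "nat \<Rightarrow> nat \<Rightarrow> nat \<Rightarrow> nat \<Rightarrow> nat" where
  "hash_fun p n a i = (a + (\<Sum>j=1..n. a ^ j * base_digit p i j)) mod p"

definition hash_family :: "nat \<Rightarrow> real \<Rightarrow> (nat \<Rightarrow> nat) set" where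
  "hash_family d' eps' =
     (let p = smallest_prime_gt (real d' powr eps'); n = hash_len eps'
      in {hash_fun p n a | a. a < p})"

end

theory Submission
  imports Defs "HOL-Computational_Algebra.Polynomial"
begin
lemma small_mult_zero:
  fixes p k :: int
  assumes "0 < p" "-p < p*k" "p*k < p"
  shows "k = 0"
proof -
  have "p*k < p*1" using assms by simp
  then have "k < 1" using assms(1) mult_less_cancel_left_pos by blast
  have "p*(-1) < p*k" using assms by simp
  then have "-1 < k" using assms(1) mult_less_cancel_left_pos by blast
  show ?thesis using \<open>k < 1\<close> \<open>-1 < k\<close> by simp
qed

lemma roots_mod_p:
  fixes p :: int and f :: "int poly"
  assumes "prime p" "\<exists>i. \<not> p dvd coeff f i"
  shows "card {a\<in>{0..<p}. p dvd poly f a} \<le> degree f"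
using assms(2) proof (induction "degree f" arbitrary: f rule: less_induct)
  case less
  show ?case
  proof (cases "{a\<in>{0..<p}. p dvd poly f a} = {}")
    case True then show ?thesis by (simp only: True card.empty)
  next
    case False
    then obtain r where r: "r \<in> {0..<p}" "p dvd poly f r" by auto
    show ?thesis
    proof (cases "degree f = 0")
      case True
      then obtain c where c: "f = [:c:]" using degree_eq_zeroE by blast
      obtain i where i: "\<not> p dvd coeff f i" using less.prems by blast
      have "i = 0" using i unfolding c by (cases i) auto
      then have False using i r unfolding c by simp
      thus ?thesis ..
    next
      case False
      define g where "g = synthetic_div f r"
      have fg: "f = [:-r,1:] * g + [:poly f r:]" using synthetic_div_correct'[of r f] by (simp add: g_def)
      have dg: "degree g = degree f - 1" by (simp add: g_def degree_synthetic_div)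
      have gnd: "\<exists>i. \<not> p dvd coeff g i"
      proof (rule ccontr)
        assume "\<not> (\<exists>i. \<not> p dvd coeff g i)" then have all: "\<forall>i. p dvd coeff g i" by auto
        define h where "h = map_poly (\<lambda>c. c div p) g"
        have gh: "g = smult p h" by (rule poly_eqI) (use all in \<open>simp add: h_def coeff_map_poly\<close>)
        obtain c where c: "poly f r = p*c" using r by (auto elim: dvdE)
        have e1: "[:-r,1:]*smult p h + [:p*c:] = smult p ([:-r,1:]*h + [:c:])"
          by (simp only: smult_add_right mult_smult_right) simp
        have "f = smult p ([:-r,1:]*h + [:c:])" using fg unfolding gh c e1 .
        then have "\<forall>i. p dvd coeff f i" by (simp add: coeff_smult)
        then show False using less.prems by auto
      qed
      have IH: "card {a\<in>{0..<p}. p dvd poly g a} \<le> degree g" using less.hyps[of g] dg False gnd by simp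
      have eq: "poly f x = (x - r) * poly g x + poly f r" for x
      proof -
        have "poly f x = poly ([:-r,1:] * g + [:poly f r:]) x" using arg_cong[OF fg, of "\<lambda>q. poly q x"] .
        then show ?thesis by (simp add: algebra_simps)
      qed
      have sub: "{a\<in>{0..<p}. p dvd poly f a} \<subseteq> insert r {a\<in>{0..<p}. p dvd poly g a}"
      proof
        fix s assume s: "s \<in> {a\<in>{0..<p}. p dvd poly f a}"
        have "p dvd (s - r) * poly g s + poly f r" using s eq[of s] by simp
        then have "p dvd (s - r) * poly g s" using dvd_add_left_iff[of p "poly f r" "(s - r) * poly g s"] r(2) by simp
        then have "p dvd (s - r) \<or> p dvd poly g s" using assms(1) prime_dvd_mult_iff by blast
        moreover have "p dvd (s - r) \<Longrightarrow> s = r"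
        proof -
          assume "p dvd (s - r)"
          then obtain k where k: "s - r = p * k" by (auto elim: dvdE)
          have "-p < s - r" "s - r < p" using s r by auto
          have "0 < p" using assms(1) prime_gt_0_int by blast
          then have "k = 0" using small_mult_zero[of p k] \<open>-p < s - r\<close> \<open>s - r < p\<close> unfolding k by blast
          then show "s = r" using k by simp
        qed
        ultimately show "s \<in> insert r {a\<in>{0..<p}. p dvd poly g a}" using s by auto
      qed
      have "card {a\<in>{0..<p}. p dvd poly f a} \<le> card (insert r {a\<in>{0..<p}. p dvd poly g a})"
      proof (rule card_mono[OF _ sub])
        have "finite {a\<in>{0..<p}. p dvd poly g a}" by (rule finite_subset[of _ "{0..<p}"]) auto
        then show "finite (insert r {a\<in>{0..<p}. p dvd poly g a})" by simp
      qed
      also have "\<dots> \<le> Suc (card {a\<in>{0..<p}. p dvd poly g a})" by (rule card_insert_le_m1) auto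
      also have "\<dots> \<le> degree f" using IH dg False by simp
      finally show ?thesis .
    qed
  qed
qed
lemma digits_eq:
  assumes "\<forall>k\<in>{1..n}. base_digit p i k = base_digit p j k"
  shows "i mod p^n = j mod p^n"
using assms proof (induction n)
  case 0 then show ?case by simp
next
  case (Suc n)
  have IH: "i mod p^n = j mod p^n" using Suc by auto
  have d: "(i div p^n) mod p = (j div p^n) mod p"
    using Suc.prems by (auto simp: base_digit_def dest: bspec[of _ _ "Suc n"])
  have "i mod p^Suc n = p^n * ((i div p^n) mod p) + i mod p^n"
    by (subst power_Suc2, rule mod_mult2_eq)
  also have "\<dots> = p^n * ((j div p^n) mod p) + j mod p^n" using IH d by simp
  also have "\<dots> = j mod p^Suc n" by (subst power_Suc2, rule mod_mult2_eq[symmetric])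
  finally show ?case .
qed

definition Dpoly :: "nat \<Rightarrow> nat \<Rightarrow> nat \<Rightarrow> nat \<Rightarrow> int poly" where
  "Dpoly p n i j = (\<Sum>k=1..n. monom (int (base_digit p i k) - int (base_digit p j k)) k)"

lemma Dpoly_degree: "degree (Dpoly p n i j) \<le> n"
  unfolding Dpoly_def
  by (rule degree_sum_le) (auto intro: order.trans[OF degree_monom_le])

lemma Dpoly_coeff: "k \<in> {1..n} \<Longrightarrow> coeff (Dpoly p n i j) k = int (base_digit p i k) - int (base_digit p j k)"
  unfolding Dpoly_def by (simp add: coeff_sum coeff_monom)

lemma Dpoly_poly: "poly (Dpoly p n i j) x = (\<Sum>k=1..n. (int (base_digit p i k) - int (base_digit p j k)) * x^k)"
  unfolding Dpoly_def by (simp add: poly_sum poly_monom)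

lemma Dpoly_nondvd:
  assumes "prime p" "i < p^n" "j < p^n" "i \<noteq> j"
  shows "\<exists>k. \<not> int p dvd coeff (Dpoly p n i j) k"
proof -
  have "\<exists>k\<in>{1..n}. base_digit p i k \<noteq> base_digit p j k"
  proof (rule ccontr)
    assume "\<not> (\<exists>k\<in>{1..n}. base_digit p i k \<noteq> base_digit p j k)"
    then have "i mod p^n = j mod p^n" using digits_eq[of n p i j] by blast
    then show False using assms by simp
  qed
  then obtain k where k: "k \<in> {1..n}" "base_digit p i k \<noteq> base_digit p j k" by blast
  have p0: "p > 0" using assms(1) prime_gt_0_nat by blast
  have lt: "base_digit p i k < p" "base_digit p j k < p" using p0 by (auto simp: base_digit_def)
  have "\<not> int p dvd int (base_digit p i k) - int (base_digit p j k)"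
  proof
    assume "int p dvd int (base_digit p i k) - int (base_digit p j k)"
    then obtain c where c: "int (base_digit p i k) - int (base_digit p j k) = int p * c" by (auto elim: dvdE)
    have "- int p < int p * c" "int p * c < int p" using lt unfolding c[symmetric] by auto
    then have "c = 0" using small_mult_zero[of "int p" c] p0 by simp
    then show False using c k(2) by simp
  qed
  then show ?thesis by (intro exI[of _ k]) (simp add: Dpoly_coeff[OF k(1)])
qed

lemma Dpoly_roots:
  assumes "prime p" "i < p^n" "j < p^n" "i \<noteq> j"
  shows "card {a::nat. a < p \<and> int p dvd poly (Dpoly p n i j) (int a)} \<le> n"
proof -
  have pi: "prime (int p)" using assms(1) by simp
  have "card {a::nat. a < p \<and> int p dvd poly (Dpoly p n i j) (int a)}
      = card (int ` {a::nat. a < p \<and> int p dvd poly (Dpoly p n i j) (int a)})"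
    by (simp add: card_image)
  also have "\<dots> \<le> card {a\<in>{0..<int p}. int p dvd poly (Dpoly p n i j) a}"
  proof (rule card_mono)
    show "finite {a\<in>{0..<int p}. int p dvd poly (Dpoly p n i j) a}"
      by (rule finite_subset[of _ "{0..<int p}"]) auto
  qed auto
  also have "\<dots> \<le> degree (Dpoly p n i j)"
    by (rule roots_mod_p[OF pi Dpoly_nondvd[OF assms]])
  also have "\<dots> \<le> n" by (rule Dpoly_degree)
  finally show ?thesis .
qed

lemma hash_eq_dvd:
  assumes "hash_fun p n a i = hash_fun p n a j"
  shows "int p dvd poly (Dpoly p n i j) (int a)"
proof -
  have "int (a + (\<Sum>k=1..n. a ^ k * base_digit p i k)) mod int p = int (a + (\<Sum>k=1..n. a ^ k * base_digit p j k)) mod int p"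
  proof -
    have "(a + (\<Sum>k=1..n. a ^ k * base_digit p i k)) mod p = (a + (\<Sum>k=1..n. a ^ k * base_digit p j k)) mod p"
      using assms by (simp add: hash_fun_def)
    then have "int ((a + (\<Sum>k=1..n. a ^ k * base_digit p i k)) mod p) = int ((a + (\<Sum>k=1..n. a ^ k * base_digit p j k)) mod p)"
      by (rule arg_cong)
    then show ?thesis by (simp only: of_nat_mod)
  qed
  then have "int p dvd int (a + (\<Sum>k=1..n. a ^ k * base_digit p i k)) - int (a + (\<Sum>k=1..n. a ^ k * base_digit p j k))"
    using mod_eq_dvd_iff by blast
  also have "int (a + (\<Sum>k=1..n. a ^ k * base_digit p i k)) - int (a + (\<Sum>k=1..n. a ^ k * base_digit p j k))
      = poly (Dpoly p n i j) (int a)"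
    unfolding Dpoly_poly by (simp add: sum_subtractf algebra_simps)
  finally show ?thesis .
qed

lemma pairs_card:
  assumes "finite S"
  shows "2 * card {(i,j)\<in>S\<times>S. i < (j::nat)} \<le> card S * card S"
proof -
  let ?P = "{(i,j)\<in>S\<times>S. i < (j::nat)}"
  let ?Q = "{(i,j)\<in>S\<times>S. j < (i::nat)}"
  have "?Q = (\<lambda>(i,j). (j,i)) ` ?P" by auto
  moreover have "inj_on (\<lambda>(i,j). (j,i)) ?P" by (auto simp: inj_on_def)
  ultimately have cq: "card ?Q = card ?P" by (simp add: card_image)
  have fin: "finite ?P" "finite ?Q" using assms by (auto intro: finite_subset[of _ "S\<times>S"])
  have u: "card (?P \<union> ?Q) = card ?P + card ?Q" by (rule card_Un_disjoint[OF fin]) auto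
  have "card (?P \<union> ?Q) \<le> card (S\<times>S)" by (rule card_mono) (use assms in auto)
  then show ?thesis using cq u by (simp add: card_cartesian_product)
qed

theorem lemmaF9:
  fixes d' :: nat and \<epsilon> \<gamma> :: real and x :: "nat \<Rightarrow> real"
  assumes "d' > 0"
    and "0 < \<epsilon>" and "\<epsilon> < 1" and "0 < \<gamma>" and "\<gamma> < 1"
    and "real d' \<ge> ((1/2) * real_of_int \<lceil>1 / (2*\<epsilon> + \<gamma>)\<rceil>) powr (1/\<gamma>)"
    and "real (card {i\<in>{1..d'}. x i \<noteq> 0}) \<le> real d' powr \<epsilon>"
  shows "\<exists>h\<in>hash_family d' (2*\<epsilon> + \<gamma>).
           \<forall>i\<in>{1..d'}. \<forall>j\<in>{1..d'}. i \<noteq> j \<and> x i \<noteq> 0 \<and> x j \<noteq> 0 \<longrightarrow> h i \<noteq> h j"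
proof -
  define e where "e = 2*\<epsilon> + \<gamma>"
  define p where "p = smallest_prime_gt (real d' powr e)"
  define n where "n = hash_len e"
  have e0: "e > 0" using assms by (simp add: e_def)
  have pex: "\<exists>q. prime q \<and> real q > real d' powr e"
  proof -
    obtain q where "prime q" "q > nat \<lceil>real d' powr e\<rceil>" using bigger_prime by blast
    then show ?thesis by (intro exI[of _ q]) linarith
  qed
  have pp: "prime p \<and> real p > real d' powr e"
    unfolding p_def smallest_prime_gt_def by (rule LeastI_ex[OF pex])
  have p0: "p > 0" using pp prime_gt_0_nat by blast
  have nceil: "real n = real_of_int \<lceil>1/e\<rceil>" using e0 by (simp add: n_def hash_len_def)
  have nge: "real n \<ge> 1/e" using nceil by linarith
  have c0: "0 < \<lceil>1/e\<rceil>" using e0 by simp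
  have n1: "n \<ge> 1" using c0 unfolding n_def hash_len_def by linarith
  have dge1: "real d' \<ge> 1" using assms(1) by simp
  have dlt: "d' < p^n"
  proof -
    have "real d' = real d' powr 1" using dge1 by simp
    also have "\<dots> \<le> real d' powr (e * real n)"
      by (rule powr_mono) (use nge e0 dge1 in \<open>auto simp: field_simps\<close>)
    also have "\<dots> = (real d' powr e) ^ n"
    proof -
      have "0 < real d' powr e" using dge1 by simp
      then show ?thesis by (simp add: powr_powr[symmetric] powr_realpow)
    qed
    also have "\<dots> < real p ^ n" by (rule power_strict_mono) (use pp n1 in auto)
    finally have "real d' < real p ^ n" .
    then have "real d' < real (p ^ n)" by simp
    then show ?thesis by (simp only: of_nat_less_iff)
  qed
  define S where "S = {i\<in>{1..d'}. x i \<noteq> 0}"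
  define s where "s = card S"
  have finS: "finite S" by (simp add: S_def)
  define P where "P = {(i,j)\<in>S\<times>S. i < (j::nat)}"
  have finP: "finite P" using finS by (auto simp: P_def intro: finite_subset[of _ "S\<times>S"])
  have P2: "2 * card P \<le> s * s" unfolding P_def s_def by (rule pairs_card[OF finS])
  define Bad where "Bad = (\<lambda>(i,j). {a::nat. a < p \<and> int p dvd poly (Dpoly p n i j) (int a)})"
  define B where "B = (\<Union>ij\<in>P. Bad ij)"
  have cardBad: "card (Bad ij) \<le> n" if ijP: "ij \<in> P" for ij
  proof -
    obtain i j where ij: "ij = (i,j)" "i \<in> S" "j \<in> S" "i < j" using ijP by (cases ij) (auto simp: P_def)
    have "i < p^n" "j < p^n" using ij dlt by (auto simp: S_def)
    then show ?thesis unfolding ij Bad_def using Dpoly_roots[OF conjunct1[OF pp]] ij by simp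
  qed
  have "card B \<le> (\<Sum>ij\<in>P. card (Bad ij))" unfolding B_def by (rule card_UN_le[OF finP])
  also have "\<dots> \<le> card P * n" using cardBad sum_bounded_above[of P "\<lambda>ij. card (Bad ij)" n] by simp
  finally have cB: "card B \<le> card P * n" .
  have s_le: "real s \<le> real d' powr \<epsilon>" using assms(7) by (simp add: s_def S_def)
  have ss: "real s * real s \<le> real d' powr (2*\<epsilon>)"
  proof -
    have "real s * real s \<le> real d' powr \<epsilon> * real d' powr \<epsilon>" using s_le by (simp add: mult_mono)
    also have "\<dots> = real d' powr (2*\<epsilon>)" by (simp add: powr_add[symmetric])
    finally show ?thesis .
  qed
  have nd: "real n / 2 \<le> real d' powr \<gamma>"
  proof -
    have h6: "((real n / 2) powr (1/\<gamma>)) \<le> real d'" using assms(6) nceil unfolding e_def by simp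
    have "real n / 2 = ((real n / 2) powr (1/\<gamma>)) powr \<gamma>" using assms(4) n1 by (simp add: powr_powr)
    also have "\<dots> \<le> real d' powr \<gamma>" by (rule powr_mono2) (use h6 assms(4) in auto)
    finally show ?thesis .
  qed
  have "real (2 * card P) \<le> real (s * s)" using P2 by (simp only: of_nat_le_iff)
  then have "real (2 * card P) * real n \<le> real (s * s) * real n" by (rule mult_right_mono) simp
  then have "real (2 * (card P * n)) \<le> real s * real s * real n" by simp
  also have "\<dots> \<le> real d' powr (2*\<epsilon>) * (2 * real d' powr \<gamma>)"
    by (rule mult_mono) (use ss nd in auto)
  also have "\<dots> = 2 * real d' powr e" by (simp add: e_def powr_add)
  also have "\<dots> < 2 * real p" using pp by simp
  finally have "card P * n < p" by linarith
  with cB have cBp: "card B < p" by linarith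
  have Bsub: "B \<subseteq> {..<p}" unfolding B_def Bad_def by (auto split: prod.splits)
  have finB: "finite B" using Bsub finite_subset by blast
  have "\<exists>a. a < p \<and> a \<notin> B"
  proof (rule ccontr)
    assume "\<not> (\<exists>a. a < p \<and> a \<notin> B)"
    then have "{..<p} \<subseteq> B" by blast
    then have "card {..<p} \<le> card B" by (rule card_mono[OF finB])
    then show False using cBp by simp
  qed
  then obtain a where a: "a < p" "a \<notin> B" by blast
  have mem: "hash_fun p n a \<in> hash_family d' (2*\<epsilon> + \<gamma>)"
    unfolding hash_family_def Let_def e_def[symmetric] p_def[symmetric] n_def[symmetric] using a by blast
  have good: "hash_fun p n a i \<noteq> hash_fun p n a j" if "(i,j) \<in> P" for i j
  proof
    assume "hash_fun p n a i = hash_fun p n a j"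
    then have "int p dvd poly (Dpoly p n i j) (int a)" by (rule hash_eq_dvd)
    then have "a \<in> B" using that a unfolding B_def Bad_def by blast
    then show False using a by simp
  qed
  show ?thesis
  proof (rule bexI[OF _ mem], intro ballI impI)
    fix i j assume ij: "i \<in> {1..d'}" "j \<in> {1..d'}" "i \<noteq> j \<and> x i \<noteq> 0 \<and> x j \<noteq> 0"
    then have "i \<in> S" "j \<in> S" by (auto simp: S_def)
    show "hash_fun p n a i \<noteq> hash_fun p n a j"
    proof (cases "i < j")
      case True then show ?thesis using good[of i j] \<open>i \<in> S\<close> \<open>j \<in> S\<close> by (simp add: P_def)
    next
      case False then have "j < i" using ij by simp
      then show ?thesis using good[of j i] \<open>i \<in> S\<close> \<open>j \<in> S\<close> by (auto simp: P_def)
    qed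
  qed
qed
end
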